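(* Let $n=3$, $\Pi=\{p_1,p_2,p_3\}$ and $\mathcal A=\{\{p_1\},\{p_2,p_3\},\{p_1,p_2,p_3\}\}$. Then: (i) $\mathit{setcon}(\mathcal A)=2$ and $\mathit{setcon}(\mathcal A|_{\Pi,\{p_2,p_3\}})=1$, so $\mathcal A$ is not fair; (ii) the agreement function $\alpha_{\mathcal A}$ of the $\mathcal A$-model satisfies $\alpha_{\mathcal A}(\{p_2\})=\alpha_{\mathcal A}(\{p_3\})=0$, $\alpha_{\mathcal A}(\Pi)=2$ and $\alpha_{\mathcal A}(P)=1$ for every other nonempty $P$; (iii) the task $\mathit{Cons}_{2,3}$ (processes $p_2,p_3$ propose values; each correct process among $p_2,p_3$ must decide a proposed value, and $p_2,p_3$ never decide different values) is solvable in the $\mathcal A$-model but not in the $\alpha_{\mathcal A}$-model. Hence the $\mathcal A$-model and the $\alpha_{\mathcal A}$-model are not equivalent with respect to task solvability.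
   Context: Processes communicate through a shared atomic-snapshot memory; a run is a sequence of process identifiers giving the order of steps, a model is a set of runs. A process is correct if it takes infinitely many steps, and participates if it takes at least one step. An algorithm solves a task in model $M$ if all decisions in every run are valid for the task and in every run of $M$ every correct process (of those required to output) decides. An adversary is a set $\mathcal A\subseteq2^\Pi$ of live sets; the $\mathcal A$-model is the set of infinite runs whose set of correct processes is in $\mathcal A$. $\mathcal A|_P=\{S\in\mathcal A:S\subseteq P\}$, $\mathcal A|_{P,Q}=\{S\in\mathcal A|_P:S\cap Q\ne\emptyset\}$; $\mathit{setcon}(\emptyset)=0$ and for $\mathcal A\ne\emptyset$, $\mathit{setcon}(\mathcal A)=\max_{S\in\mathcal A}\min_{a\in S}\mathit{setcon}(\mathcal A|_{S\setminus\{a\}})+1$. $\mathcal A$ is fair if $\mathit{setcon}(\mathcal A|_{P,Q})=\min(|Q|,\mathit{setcon}(\mathcal A|_P))$ for all $Q\subseteq P\subseteq\Pi$. The agreement function of a model $M$ maps $P$ to the least $k$ such that $k$-set consensus is solvable in the runs of $M$ where only processes of $P$ participate ($0$ if there is no infinite such run). For monotonic $\alpha$, the $\alpha$-model is the set of runs whose participating set $P$ satisfies $\alpha(P)\ge1$ and in which at most $\alpha(P)-1$ participating processes take only finitely many steps. *)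

theory Defs
  imports Main
begin

datatype proc = P1 | P2 | P3

lemma UNIV_proc: "(UNIV :: proc set) = {P1, P2, P3}"
  using proc.exhaust by auto

instance proc :: finite
  by standard (simp add: UNIV_proc)

definition restr :: "'a set set \<Rightarrow> 'a set \<Rightarrow> 'a set set" where
  "restr A P = {S \<in> A. S \<subseteq> P}"

definition restr2 :: "'a set set \<Rightarrow> 'a set \<Rightarrow> 'a set \<Rightarrow> 'a set set" where
  "restr2 A P Q = {S \<in> restr A P. S \<inter> Q \<noteq> {}}"

function setcon :: "('a::finite) set set \<Rightarrow> nat" where
  "setcon A = (if A = {} then 0
     else Max ((\<lambda>S. Min ((\<lambda>a. setcon (restr A (S - {a}))) ` S) + 1) ` A))"
  by auto
termination
proof (relation "measure (\<lambda>A. card (\<Union>A))")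
  show "wf (measure (\<lambda>A::'a set set. card (\<Union> A)))" by simp
next
  fix A :: "'a set set" and S a
  assume "A \<noteq> {}" "S \<in> A" "a \<in> S"
  have "\<Union>(restr A (S - {a})) \<subseteq> S - {a}" by (auto simp: restr_def)
  also have "S - {a} \<subset> \<Union>A" using \<open>S \<in> A\<close> \<open>a \<in> S\<close> by auto
  finally have "\<Union>(restr A (S - {a})) \<subset> \<Union>A" .
  then show "(restr A (S - {a}), A) \<in> measure (\<lambda>A. card (\<Union> A))"
    by (simp add: psubset_card_mono)
qed

declare setcon.simps[simp del]

definition fair :: "('a::finite) set set \<Rightarrow> bool" where
  "fair A \<longleftrightarrow> (\<forall>P Q. Q \<subseteq> P \<longrightarrow>
      setcon (restr2 A P Q) = min (card Q) (setcon (restr A P)))"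

definition Aadv :: "proc set set" where
  "Aadv = {{P1}, {P2, P3}, {P1, P2, P3}}"

type_synonym mem = "proc \<Rightarrow> nat option"

datatype operation = Update nat | Snapshot

text \<open>A deterministic algorithm: local states and register values are natural
  numbers (any countable encoding); inputs are optional natural numbers.\<close>
record alg =
  a_init :: "proc \<Rightarrow> nat option \<Rightarrow> nat"
  a_op :: "proc \<Rightarrow> nat \<Rightarrow> operation"
  a_next_upd :: "proc \<Rightarrow> nat \<Rightarrow> nat"
  a_next_snap :: "proc \<Rightarrow> nat \<Rightarrow> mem \<Rightarrow> nat"
  a_dec :: "proc \<Rightarrow> nat \<Rightarrow> nat option"

type_synonym config = "(proc \<Rightarrow> nat) \<times> mem"

definition step :: "alg \<Rightarrow> proc \<Rightarrow> config \<Rightarrow> config" where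
  "step A p c = (let st = fst c; m = snd c in
     case a_op A p (st p) of
       Update v \<Rightarrow> (st(p := a_next_upd A p (st p)), m(p := Some v))
     | Snapshot \<Rightarrow> (st(p := a_next_snap A p (st p) m), m))"

text \<open>A run is given by an infinite schedule of process identifiers; finite
  runs are prefixes of such schedules.\<close>
type_synonym schedule = "nat \<Rightarrow> proc"

fun exec :: "alg \<Rightarrow> (proc \<Rightarrow> nat option) \<Rightarrow> schedule \<Rightarrow> nat \<Rightarrow> config" where
  "exec A I \<sigma> 0 = ((\<lambda>p. a_init A p (I p)), (\<lambda>p. None))"
| "exec A I \<sigma> (Suc t) = step A (\<sigma> t) (exec A I \<sigma> t)"

definition decides :: "alg \<Rightarrow> (proc \<Rightarrow> nat option) \<Rightarrow> schedule \<Rightarrow> proc \<Rightarrow> nat \<Rightarrow> bool" where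
  "decides A I \<sigma> p v \<longleftrightarrow>
     (\<exists>t. \<sigma> t = p \<and> a_dec A p (fst (exec A I \<sigma> (Suc t)) p) = Some v)"

definition correct :: "schedule \<Rightarrow> proc set" where
  "correct \<sigma> = {p. infinite {t. \<sigma> t = p}}"

definition participating :: "schedule \<Rightarrow> proc set" where
  "participating \<sigma> = range \<sigma>"

definition adv_model :: "proc set set \<Rightarrow> schedule set" where
  "adv_model \<A> = {\<sigma>. correct \<sigma> \<in> \<A>}"

definition alpha_model :: "(proc set \<Rightarrow> nat) \<Rightarrow> schedule set" where
  "alpha_model \<alpha> = {\<sigma>. \<alpha> (participating \<sigma>) \<ge> 1 \<and>
      card (participating \<sigma> - correct \<sigma>) \<le> \<alpha> (participating \<sigma>) - 1}"

definition kset_solves :: "nat \<Rightarrow> schedule set \<Rightarrow> alg \<Rightarrow> bool" where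
  "kset_solves k M A \<longleftrightarrow>
     (\<forall>I \<sigma>. (\<forall>p. I p \<noteq> None) \<longrightarrow>
        (let D = {v. \<exists>p. decides A I \<sigma> p v} in
          finite D \<and> card D \<le> k \<and>
          (\<forall>v\<in>D. \<exists>q\<in>participating \<sigma>. I q = Some v))) \<and>
     (\<forall>I \<sigma>. (\<forall>p. I p \<noteq> None) \<longrightarrow> \<sigma> \<in> M \<longrightarrow>
        (\<forall>p\<in>correct \<sigma>. \<exists>v. decides A I \<sigma> p v))"

definition kset_solvable :: "nat \<Rightarrow> schedule set \<Rightarrow> bool" where
  "kset_solvable k M \<longleftrightarrow> (\<exists>A. kset_solves k M A)"

definition agreement_fun :: "schedule set \<Rightarrow> proc set \<Rightarrow> nat" where
  "agreement_fun M P =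
     (if \<exists>\<sigma>\<in>M. participating \<sigma> \<subseteq> P
      then (LEAST k. kset_solvable k {\<sigma>\<in>M. participating \<sigma> \<subseteq> P})
      else 0)"

definition cons23_inputs :: "(proc \<Rightarrow> nat option) \<Rightarrow> bool" where
  "cons23_inputs I \<longleftrightarrow> I P1 = None \<and> I P2 \<noteq> None \<and> I P3 \<noteq> None"

definition cons23_solves :: "schedule set \<Rightarrow> alg \<Rightarrow> bool" where
  "cons23_solves M A \<longleftrightarrow>
     (\<forall>I \<sigma>. cons23_inputs I \<longrightarrow>
        (\<forall>p v. p \<in> {P2, P3} \<and> decides A I \<sigma> p v \<longrightarrow>
            (\<exists>q\<in>{P2, P3} \<inter> participating \<sigma>. I q = Some v)) \<and>
        (\<forall>p q v w. p \<in> {P2, P3} \<and> q \<in> {P2, P3} \<and>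
            decides A I \<sigma> p v \<and> decides A I \<sigma> q w \<longrightarrow> v = w)) \<and>
     (\<forall>I \<sigma>. cons23_inputs I \<longrightarrow> \<sigma> \<in> M \<longrightarrow>
        (\<forall>p\<in>{P2, P3} \<inter> correct \<sigma>. \<exists>v. decides A I \<sigma> p v))"

definition cons23_solvable :: "schedule set \<Rightarrow> bool" where
  "cons23_solvable M \<longleftrightarrow> (\<exists>A. cons23_solves M A)"

end

theory Submission imports Defs "HOL-Library.Infinite_Set" begin

definition run :: "alg \<Rightarrow> config \<Rightarrow> proc list \<Rightarrow> config" where
  "run A c xs = fold (step A) xs c"

definition init :: "alg \<Rightarrow> (proc \<Rightarrow> nat option) \<Rightarrow> config" where
  "init A I = ((\<lambda>p. a_init A p (I p)), (\<lambda>p. None))"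

lemma run_Nil[simp]: "run A c [] = c" by (simp add: run_def)
lemma run_append[simp]: "run A c (xs @ ys) = run A (run A c xs) ys" by (simp add: run_def)
lemma run_Cons[simp]: "run A c (x # ys) = run A (step A x c) ys" by (simp add: run_def)

lemma exec_run: "exec A I \<sigma> n = run A (init A I) (map \<sigma> [0..<n])"
  by (induction n) (simp_all add: init_def)

lemma step_fst_other: "q \<noteq> p \<Longrightarrow> fst (step A p c) q = fst c q"
  by (simp add: step_def Let_def split: operation.split)
lemma step_snd_other: "q \<noteq> p \<Longrightarrow> snd (step A p c) q = snd c q"
  by (simp add: step_def Let_def split: operation.split)

definition agree :: "proc set \<Rightarrow> config \<Rightarrow> config \<Rightarrow> bool" where
  "agree G c d \<longleftrightarrow> snd c = snd d \<and> (\<forall>g\<in>G. fst c g = fst d g)"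

lemma agree_step: "agree G c d \<Longrightarrow> p \<in> G \<Longrightarrow> agree G (step A p c) (step A p d)"
  by (cases c; cases d) (auto simp: agree_def step_def Let_def split: operation.split)

lemma agree_run: "agree G c d \<Longrightarrow> set xs \<subseteq> G \<Longrightarrow> agree G (run A c xs) (run A d xs)"
proof (induction xs arbitrary: c d)
  case Nil thus ?case by simp
next
  case (Cons x xs)
  have "agree G (step A x c) (step A x d)" using Cons.prems agree_step by simp
  thus ?case using Cons by simp
qed

lemma commute: "p \<noteq> q \<Longrightarrow> \<exists>r\<in>{p,q}. agree (-{r}) (step A q (step A p c)) (step A p (step A q c))"
  apply (cases c)
  apply (cases "a_op A p (fst c p)"; cases "a_op A q (fst c q)")
  apply (auto simp: agree_def step_def Let_def fun_upd_twist split: operation.split)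
  done

definition decL :: "alg \<Rightarrow> (proc \<Rightarrow> nat option) \<Rightarrow> proc set \<Rightarrow> proc list \<Rightarrow> nat \<Rightarrow> bool" where
  "decL A I DP xs v \<longleftrightarrow> (\<exists>n<length xs. xs!n \<in> DP \<and>
     a_dec A (xs!n) (fst (run A (init A I) (take (Suc n) xs)) (xs!n)) = Some v)"

lemma decL_append: "decL A I DP xs v \<Longrightarrow> decL A I DP (xs @ ys) v"
  unfolding decL_def by (auto simp: nth_append)

lemma decides_decL: "decides A I \<sigma> p v \<Longrightarrow> p \<in> DP \<Longrightarrow> \<exists>n. decL A I DP (map \<sigma> [0..<n]) v"
  unfolding decides_def decL_def
  apply clarify
  apply (rule_tac x="Suc t" in exI)
  apply (rule_tac x=t in exI)
  apply (simp add: exec_run del: upt_Suc)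
  done

lemma decL_decides: "decL A I DP xs v \<Longrightarrow> map \<sigma> [0..<length xs] = xs \<Longrightarrow> \<exists>p\<in>DP. decides A I \<sigma> p v"
  unfolding decides_def decL_def
proof clarify
  fix n assume e: "map \<sigma> [0..<length xs] = xs" and n: "n < length xs" "xs ! n \<in> DP"
    and d: "a_dec A (xs ! n) (fst (run A (init A I) (take (Suc n) xs)) (xs ! n)) = Some v"
  have s: "\<sigma> n = xs ! n" using arg_cong[OF e, of "\<lambda>l. l!n"] n by simp
  have t: "take (Suc n) xs = map \<sigma> [0..<Suc n]" using arg_cong[OF e, of "take (Suc n)"] n
    by (simp add: take_map del: upt_Suc)
  have "exec A I \<sigma> (Suc n) = run A (init A I) (map \<sigma> [0..<Suc n])" by (rule exec_run)
  thus "\<exists>p\<in>DP. \<exists>t. \<sigma> t = p \<and> a_dec A p (fst (exec A I \<sigma> (Suc t)) p) = Some v"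
    using s n d t by (intro bexI[of _ "xs!n"] exI[of _ n]) simp_all
qed

definition app :: "proc list \<Rightarrow> schedule \<Rightarrow> schedule" where
  "app xs \<tau> t = (if t < length xs then xs!t else \<tau> (t - length xs))"

lemma map_app: "map (app xs \<tau>) [0..<length xs] = xs"
  by (rule nth_equalityI) (auto simp: app_def)

lemma map_app2: "map (app xs \<tau>) [0..<length xs + n] = xs @ map \<tau> [0..<n]"
  by (rule nth_equalityI) (auto simp: app_def nth_append)

lemma map_app_take: "k \<le> length xs \<Longrightarrow> map (app xs \<tau>) [0..<k] = take k xs"
  by (rule nth_equalityI) (auto simp: app_def)

lemma unbounded_infinite: "infinite S \<longleftrightarrow> (\<forall>N. \<exists>t\<ge>N. t \<in> (S::nat set))"
  using infinite_nat_iff_unbounded_le by blast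

lemma correct_app: "correct (app xs \<tau>) = correct \<tau>"
proof -
  have "(\<forall>N. \<exists>t\<ge>N. app xs \<tau> t = p) \<longleftrightarrow> (\<forall>N. \<exists>t\<ge>N. \<tau> t = p)" for p
  proof
    assume H: "\<forall>N. \<exists>t\<ge>N. app xs \<tau> t = p"
    show "\<forall>N. \<exists>t\<ge>N. \<tau> t = p"
    proof
      fix N obtain t where "t \<ge> N + length xs" "app xs \<tau> t = p" using H by blast
      thus "\<exists>t\<ge>N. \<tau> t = p" by (intro exI[of _ "t - length xs"]) (auto simp: app_def)
    qed
  next
    assume H: "\<forall>N. \<exists>t\<ge>N. \<tau> t = p"
    show "\<forall>N. \<exists>t\<ge>N. app xs \<tau> t = p"
    proof
      fix N obtain t where "t \<ge> N" "\<tau> t = p" using H by blast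
      thus "\<exists>t\<ge>N. app xs \<tau> t = p" by (intro exI[of _ "t + length xs"]) (auto simp: app_def)
    qed
  qed
  thus ?thesis unfolding correct_def by (simp add: unbounded_infinite)
qed

lemma participating_app: "participating (app xs \<tau>) = set xs \<union> range \<tau>"
proof -
  have "range (app xs \<tau>) \<subseteq> set xs \<union> range \<tau>" by (auto simp: app_def)
  moreover have "set xs \<subseteq> range (app xs \<tau>)"
  proof
    fix x assume "x \<in> set xs" then obtain i where "i < length xs" "xs!i = x" by (auto simp: in_set_conv_nth)
    hence "app xs \<tau> i = x" by (simp add: app_def)
    thus "x \<in> range (app xs \<tau>)" by (rule range_eqI[OF sym])
  qed
  moreover have "range \<tau> \<subseteq> range (app xs \<tau>)"
  proof
    fix x assume "x \<in> range \<tau>" then obtain t where "\<tau> t = x" by auto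
    hence "app xs \<tau> (t + length xs) = x" by (simp add: app_def)
    thus "x \<in> range (app xs \<tau>)" by (rule range_eqI[OF sym])
  qed
  ultimately show ?thesis unfolding participating_def by blast
qed

lemma correct_sub: "correct \<sigma> \<subseteq> participating \<sigma>"
  unfolding correct_def participating_def by (auto dest!: not_finite_existsD)

lemma correct_ne: "correct \<sigma> \<noteq> {}"
proof
  assume "correct \<sigma> = {}"
  hence "\<forall>p. finite {t. \<sigma> t = p}" by (auto simp: correct_def)
  hence "finite (\<Union>p. {t. \<sigma> t = p})" by simp
  moreover have "(\<Union>p. {t. \<sigma> t = p}) = UNIV" by auto
  ultimately show False by simp
qed

definition rr :: schedule where "rr n = [P1, P2, P3] ! (n mod 3)"

lemma correct_rr: "correct rr = UNIV"
proof -
  have "\<exists>t\<ge>N. rr t = p" for N p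
  proof -
    have "\<exists>k<3. [P1,P2,P3] ! k = p"
    proof (cases p)
      case P1 thus ?thesis by (intro exI[of _ 0]) simp
    next
      case P2 thus ?thesis by (intro exI[of _ 1]) simp
    next
      case P3 thus ?thesis by (intro exI[of _ 2]) simp
    qed
    then obtain k where k: "k < 3" "[P1,P2,P3] ! k = p" by blast
    have "rr (3*N + k) = p" using k by (simp add: rr_def)
    thus ?thesis by (intro exI[of _ "3*N+k"]) auto
  qed
  thus ?thesis unfolding correct_def by (auto simp: unbounded_infinite)
qed

definition alt :: "proc \<Rightarrow> proc \<Rightarrow> schedule" where "alt p q t = (if even t then p else q)"

lemma correct_alt: "correct (alt p q) = {p, q}"
proof -
  have "\<forall>N. \<exists>t\<ge>N. alt p q t = p"
  proof
    fix N show "\<exists>t\<ge>N. alt p q t = p" by (rule exI[of _ "2*N"]) (simp add: alt_def)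
  qed
  moreover have "\<forall>N. \<exists>t\<ge>N. alt p q t = q"
  proof
    fix N show "\<exists>t\<ge>N. alt p q t = q"
    proof (cases "p = q")
      case True thus ?thesis by (intro exI[of _ "2*N"]) (simp add: alt_def)
    next
      case False thus ?thesis by (intro exI[of _ "2*N+1"]) (simp add: alt_def)
    qed
  qed
  moreover have "r \<notin> {p,q} \<Longrightarrow> {t. alt p q t = r} = {}" for r by (auto simp: alt_def)
  ultimately show ?thesis unfolding correct_def by (auto simp: unbounded_infinite) (metis le0)
qed

lemma range_alt: "range (alt p q) = {p, q}"
proof -
  have "range (alt p q) \<subseteq> {p,q}" by (auto simp: alt_def)
  moreover have "p \<in> range (alt p q)" using range_eqI[of p "alt p q" 0] by (simp add: alt_def)
  moreover have "q \<in> range (alt p q)" using range_eqI[of q "alt p q" 1] by (simp add: alt_def)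
  ultimately show ?thesis by blast
qed

lemma correct_const: "correct (\<lambda>_. p) = {p}"
  by (auto simp: correct_def)


lemma transfer:
  assumes pq: "p \<noteq> q"
    and ag: "agree (-{r}) (run A (init A I) (c@[p,q])) (run A (init A I) (c@[q,p]))"
    and dr: "d \<noteq> r" and \<tau>: "r \<notin> range \<tau>"
    and dec: "decides A I (app (c@[p,q]) \<tau>) d v"
  shows "decides A I (app (c@[q,p]) \<tau>) d v"
proof -
  let ?L = "length c"
  let ?s1 = "app (c@[p,q]) \<tau>" and ?s2 = "app (c@[q,p]) \<tau>"
  obtain t where t: "?s1 t = d" "a_dec A d (fst (exec A I ?s1 (Suc t)) d) = Some v"
    using dec unfolding decides_def by blast
  have ex: "\<And>\<sigma> n. exec A I \<sigma> n = run A (init A I) (map \<sigma> [0..<n])" by (rule exec_run)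
  consider "t < ?L" | "t = ?L" | "t = Suc ?L" | k where "t = Suc (Suc ?L) + k" by (metis add_Suc less_add_Suc1 linorder_neqE_nat not_less_eq less_imp_Suc_add)
  thus ?thesis
  proof cases
    case 1
    have a: "map ?s1 [0..<Suc t] = take (Suc t) c" using 1 by (simp add: map_app_take del: upt_Suc)
    have b: "map ?s2 [0..<Suc t] = take (Suc t) c" using 1 by (simp add: map_app_take del: upt_Suc)
    have "?s2 t = d" using t(1) 1 by (simp add: app_def nth_append)
    moreover have "exec A I ?s2 (Suc t) = exec A I ?s1 (Suc t)" unfolding ex a b ..
    ultimately show ?thesis unfolding decides_def using t(2) by metis
  next
    case 2
    have dp: "d = p" using t(1) 2 by (simp add: app_def nth_append)
    have a: "map ?s1 [0..<Suc t] = c @ [p]" using 2 by (simp add: map_app_take del: upt_Suc)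
    have b: "map ?s2 [0..<Suc (Suc t)] = c @ [q, p]" using 2 map_app[of "c@[q,p]" \<tau>] by (simp del: upt_Suc)
    have "fst (run A (init A I) (c@[p,q])) p = fst (run A (init A I) (c@[p])) p"
      using pq by (simp add: step_fst_other)
    moreover have "fst (run A (init A I) (c@[p,q])) p = fst (run A (init A I) (c@[q,p])) p"
      using ag dr dp unfolding agree_def by auto
    ultimately have "a_dec A d (fst (exec A I ?s2 (Suc (Suc t))) d) = Some v"
      using t(2) unfolding ex a b dp by simp
    moreover have "?s2 (Suc t) = d" using 2 dp by (simp add: app_def nth_append)
    ultimately show ?thesis unfolding decides_def by blast
  next
    case 3
    have dq: "d = q" using t(1) 3 by (simp add: app_def nth_append)
    have a: "map ?s1 [0..<Suc t] = c @ [p, q]" using 3 map_app[of "c@[p,q]" \<tau>] by (simp del: upt_Suc)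
    have b: "map ?s2 [0..<Suc ?L] = c @ [q]" by (simp add: map_app_take del: upt_Suc)
    have "fst (run A (init A I) (c@[q,p])) q = fst (run A (init A I) (c@[q])) q"
      using pq by (simp add: step_fst_other)
    moreover have "fst (run A (init A I) (c@[p,q])) q = fst (run A (init A I) (c@[q,p])) q"
      using ag dr dq unfolding agree_def by auto
    ultimately have "a_dec A d (fst (exec A I ?s2 (Suc ?L)) d) = Some v"
      using t(2) unfolding ex a b dq by simp
    moreover have "?s2 ?L = d" using dq by (simp add: app_def nth_append)
    ultimately show ?thesis unfolding decides_def by blast
  next
    case 4
    have len: "Suc t = length (c@[p,q]) + Suc k" "Suc t = length (c@[q,p]) + Suc k" using 4 by simp_all
    have a: "map ?s1 [0..<Suc t] = (c@[p,q]) @ map \<tau> [0..<Suc k]" unfolding len(1) by (rule map_app2)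
    have b: "map ?s2 [0..<Suc t] = (c@[q,p]) @ map \<tau> [0..<Suc k]" unfolding len(2) by (rule map_app2)
    have st: "?s1 t = \<tau> k" "?s2 t = \<tau> k" using 4 by (simp_all add: app_def)
    have "set (map \<tau> [0..<Suc k]) \<subseteq> -{r}" using \<tau> by auto
    hence "agree (-{r}) (run A (run A (init A I) (c@[p,q])) (map \<tau> [0..<Suc k]))
                      (run A (run A (init A I) (c@[q,p])) (map \<tau> [0..<Suc k]))"
      using agree_run[OF ag] by blast
    hence "fst (exec A I ?s1 (Suc t)) d = fst (exec A I ?s2 (Suc t)) d"
      unfolding ex a b using dr by (simp add: agree_def del: upt_Suc run_append) (simp del: upt_Suc)
    thus ?thesis unfolding decides_def using t st by metis
  qed
qed

locale flp =
  fixes A :: alg and I :: "proc \<Rightarrow> nat option" and DP :: "proc set" and M :: "schedule set"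
  assumes agr: "\<And>\<sigma> p q v w. p \<in> DP \<Longrightarrow> q \<in> DP \<Longrightarrow> decides A I \<sigma> p v \<Longrightarrow> decides A I \<sigma> q w \<Longrightarrow> v = w"
  and live: "\<And>\<sigma> p. \<sigma> \<in> M \<Longrightarrow> p \<in> DP \<Longrightarrow> p \<in> correct \<sigma> \<Longrightarrow> \<exists>v. decides A I \<sigma> p v"
  and fairM: "\<And>\<sigma>. correct \<sigma> = UNIV \<Longrightarrow> \<sigma> \<in> M"
  and DPne: "DP \<noteq> {}"
  and cont: "\<And>r. \<exists>\<tau> d. d \<in> DP \<and> d \<noteq> r \<and> r \<notin> range \<tau> \<and> (\<forall>xs. app xs \<tau> \<in> M \<and> d \<in> correct (app xs \<tau>))"
  and init2: "\<exists>\<sigma>1 \<sigma>2 p1 p2 v1 v2. p1 \<in> DP \<and> p2 \<in> DP \<and> decides A I \<sigma>1 p1 v1 \<and> decides A I \<sigma>2 p2 v2 \<and> v1 \<noteq> v2"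
begin

definition V :: "proc list \<Rightarrow> nat set" where
  "V xs = {v. \<exists>u. decL A I DP (xs @ u) v}"

definition biv :: "proc list \<Rightarrow> bool" where
  "biv xs \<longleftrightarrow> (\<exists>v\<in>V xs. \<exists>w\<in>V xs. v \<noteq> w)"

lemma agreeL: assumes "decL A I DP xs v" "decL A I DP xs w" shows "v = w"
proof -
  obtain p where p: "p \<in> DP" "decides A I (app xs rr) p v" using decL_decides[OF assms(1) map_app] by blast
  obtain q where q: "q \<in> DP" "decides A I (app xs rr) q w" using decL_decides[OF assms(2) map_app] by blast
  show ?thesis using agr[OF p(1) q(1) p(2) q(2)] .
qed

lemma decL_V: "decL A I DP xs v \<Longrightarrow> v \<in> V xs"
  unfolding V_def by (rule CollectI, rule exI[of _ "[]"]) simp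

lemma V_append: "v \<in> V (xs @ ys) \<Longrightarrow> v \<in> V xs"
proof -
  assume "v \<in> V (xs @ ys)"
  then obtain u where "decL A I DP ((xs @ ys) @ u) v" unfolding V_def by blast
  hence "decL A I DP (xs @ (ys @ u)) v" by simp
  thus "v \<in> V xs" unfolding V_def by blast
qed

lemma decides_V:
  assumes d: "decides A I \<sigma> p v" and p: "p \<in> DP" and m: "map \<sigma> [0..<length xs] = xs"
  shows "v \<in> V xs"
proof -
  obtain n where n: "decL A I DP (map \<sigma> [0..<n]) v" using decides_decL[OF d p] by blast
  have u1: "[0..<n + length xs] = [0..<n] @ [n..<n + length xs]" using upt_add_eq_append[of 0 n "length xs"] by simp
  have u2: "[0..<length xs + n] = [0..<length xs] @ [length xs..<length xs + n]" using upt_add_eq_append[of 0 "length xs" n] by simp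
  have e1: "map \<sigma> [0..<n + length xs] = map \<sigma> [0..<n] @ map \<sigma> [n..<n + length xs]"
    by (simp only: u1 map_append)
  have e2: "map \<sigma> [0..<length xs + n] = xs @ map \<sigma> [length xs..<length xs + n]"
    by (simp only: u2 map_append m)
  have "decL A I DP (map \<sigma> [0..<n] @ map \<sigma> [n..<n + length xs]) v" by (rule decL_append[OF n])
  hence "decL A I DP (map \<sigma> [0..<n + length xs]) v" using e1 by simp
  hence "decL A I DP (map \<sigma> [0..<length xs + n]) v" by (simp add: add.commute)
  hence "decL A I DP (xs @ map \<sigma> [length xs..<length xs + n]) v" using e2 by simp
  thus ?thesis unfolding V_def by blast
qed

lemma V_ne: "V xs \<noteq> {}"
proof -
  obtain d where d: "d \<in> DP" using DPne by blast
  have "app xs rr \<in> M" by (rule fairM) (simp add: correct_app correct_rr)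
  moreover have "d \<in> correct (app xs rr)" by (simp add: correct_app correct_rr)
  ultimately obtain v where "decides A I (app xs rr) d v" using live[OF _ d] by blast
  thus ?thesis using decides_V[OF _ d map_app] by blast
qed

lemma univ: "\<not> biv xs \<Longrightarrow> v \<in> V xs \<Longrightarrow> w \<in> V xs \<Longrightarrow> v = w"
  unfolding biv_def by blast

lemma dec_not_biv: "decL A I DP xs v \<Longrightarrow> \<not> biv xs"
proof
  assume d: "decL A I DP xs v" and "biv xs"
  then obtain a b where ab: "a \<in> V xs" "b \<in> V xs" "a \<noteq> b" unfolding biv_def by blast
  have "\<And>c. c \<in> V xs \<Longrightarrow> c = v"
  proof -
    fix c assume "c \<in> V xs"
    then obtain u where "decL A I DP (xs @ u) c" unfolding V_def by blast
    moreover have "decL A I DP (xs @ u) v" using d decL_append by blast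
    ultimately show "c = v" using agreeL by blast
  qed
  thus False using ab by blast
qed

lemma neighbor:
  assumes U: "\<And>u. \<not> biv (w @ u @ [p])"
    and z: "z \<in> V (w @ [p])"
  shows "z' \<in> V (w @ u @ [p]) \<Longrightarrow> z' \<noteq> z \<Longrightarrow> \<exists>u' q a b. a \<in> V (w @ u' @ [p]) \<and> b \<in> V (w @ (u' @ [q]) @ [p]) \<and> a \<noteq> b"
proof (induction u arbitrary: z' rule: rev_induct)
  case Nil
  thus ?case using univ[OF U[of "[]"]] z by simp
next
  case (snoc q u)
  obtain a where a: "a \<in> V (w @ u @ [p])" using V_ne by blast
  show ?case
  proof (cases "a = z'")
    case False thus ?thesis using a snoc.prems(1) by blast
  next
    case True thus ?thesis using snoc.IH a snoc.prems(2) by blast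
  qed
qed

lemma key: assumes "biv w" shows "\<exists>u. biv (w @ u @ [p])"
proof (rule ccontr)
  assume "\<not> ?thesis"
  hence U: "\<And>u. \<not> biv (w @ u @ [p])" by blast
  obtain x y where xy: "x \<in> V w" "y \<in> V w" "x \<noteq> y" using assms unfolding biv_def by blast
  have lift: "\<exists>u. v \<in> V (w @ u @ [p])" if vw: "v \<in> V w" for v
  proof -
    obtain u where "decL A I DP (w @ u) v" using vw unfolding V_def by blast
    hence "decL A I DP ((w @ u) @ [p]) v" by (rule decL_append)
    hence "v \<in> V (w @ u @ [p])" using decL_V by simp
    thus ?thesis by blast
  qed
  obtain z where z: "z \<in> V (w @ [p])" using V_ne by blast
  have "\<exists>u z'. z' \<in> V (w @ u @ [p]) \<and> z' \<noteq> z"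
  proof (cases "z = x")
    case True thus ?thesis using lift[OF xy(2)] xy(3) by blast
  next
    case False thus ?thesis using lift[OF xy(1)] by blast
  qed
  then obtain u z' where "z' \<in> V (w @ u @ [p])" "z' \<noteq> z" by blast
  then obtain u' q a b where ab: "a \<in> V (w @ u' @ [p])" "b \<in> V (w @ (u' @ [q]) @ [p])" "a \<noteq> b"
    using neighbor[OF U z] by blast
  define c where "c = w @ u'"
  have Va: "\<And>v. v \<in> V (c @ [p]) \<Longrightarrow> v = a" using univ[OF U[of u']] ab(1) unfolding c_def by simp
  have Vb: "\<And>v. v \<in> V (c @ [q, p]) \<Longrightarrow> v = b" using univ[OF U[of "u' @ [q]"]] ab(2) unfolding c_def by simp
  show False
  proof (cases "q = p")
    case True
    have "b \<in> V (c @ [p])" using ab(2) V_append[of b "c @ [p]" "[p]"] True unfolding c_def by simp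
    thus False using Va ab(3) by blast
  next
    case False
    hence pq: "p \<noteq> q" by blast
    obtain r where r: "r \<in> {p,q}" and ag0: "agree (-{r}) (step A q (step A p (run A (init A I) c))) (step A p (step A q (run A (init A I) c)))"
      using commute[OF pq] by blast
    have ag: "agree (-{r}) (run A (init A I) (c@[p,q])) (run A (init A I) (c@[q,p]))" using ag0 by simp
    obtain \<tau> d where td: "d \<in> DP" "d \<noteq> r" "r \<notin> range \<tau>" "\<And>xs. app xs \<tau> \<in> M" "\<And>xs. d \<in> correct (app xs \<tau>)"
      using cont[of r] by blast
    obtain v where dv: "decides A I (app (c@[p,q]) \<tau>) d v" using live[OF td(4) td(1) td(5)] by blast
    have "v \<in> V (c @ [p] @ [q])" using decides_V[OF dv td(1) map_app] by simp
    hence "v \<in> V (c @ [p])" using V_append by (metis append.assoc)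
    hence va: "v = a" using Va by blast
    have "decides A I (app (c@[q,p]) \<tau>) d v" using transfer[OF pq ag td(2) td(3) dv] .
    hence "v \<in> V (c @ [q, p])" using decides_V[OF _ td(1) map_app] by blast
    hence "v = b" using Vb by blast
    thus False using va ab(3) by blast
  qed
qed

lemma contradiction: False
proof -
  obtain \<sigma>1 \<sigma>2 p1 p2 v1 v2 where i: "p1 \<in> DP" "p2 \<in> DP" "decides A I \<sigma>1 p1 v1" "decides A I \<sigma>2 p2 v2" "v1 \<noteq> v2"
    using init2 by blast
  have b0: "biv []" unfolding biv_def using decides_V[OF i(3) i(1), of "[]"] decides_V[OF i(4) i(2), of "[]"] i(5) by auto
  define W where "W = rec_nat [] (\<lambda>n w. w @ (SOME u. biv (w @ u @ [rr n])) @ [rr n])"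
  have W0: "W 0 = []" unfolding W_def by simp
  have WS: "W (Suc n) = W n @ (SOME u. biv (W n @ u @ [rr n])) @ [rr n]" for n unfolding W_def by simp
  have Wb: "biv (W n)" for n
  proof (induction n)
    case 0 thus ?case using b0 W0 by simp
  next
    case (Suc n)
    have "\<exists>u. biv (W n @ u @ [rr n])" using key[OF Suc.IH] .
    hence "biv (W n @ (SOME u. biv (W n @ u @ [rr n])) @ [rr n])" by (rule someI_ex)
    thus ?case using WS by simp
  qed
  have Wlen: "n \<le> length (W n)" for n
    by (induction n) (simp_all add: W0 WS)
  have Wpre: "\<exists>u. W n = W m @ u" if "m \<le> n" for m n
    using that
  proof (induction n rule: dec_induct)
    case base thus ?case by simp
  next
    case (step n) thus ?case using WS by (metis append.assoc)
  qed
  define \<sigma> where "\<sigma> t = W (Suc t) ! t" for t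
  have \<sigma>W: "\<sigma> t = W n ! t" if "t < length (W n)" for n t
  proof (cases "n \<le> Suc t")
    case True
    then obtain u where "W (Suc t) = W n @ u" using Wpre by blast
    thus ?thesis using that unfolding \<sigma>_def by (simp add: nth_append)
  next
    case False
    then obtain u where u: "W n = W (Suc t) @ u" using Wpre[of "Suc t" n] by auto
    have "t < length (W (Suc t))" using Wlen[of "Suc t"] by simp
    thus ?thesis using u unfolding \<sigma>_def by (simp add: nth_append)
  qed
  have \<sigma>map: "map \<sigma> [0..<length (W n)] = W n" for n
    by (rule nth_equalityI) (simp_all add: \<sigma>W)
  have fair: "correct \<sigma> = UNIV"
  proof -
    have "\<exists>t\<ge>N. \<sigma> t = p" for N p
    proof -
      have "\<exists>k<3. [P1,P2,P3] ! k = p"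
      proof (cases p)
        case P1 thus ?thesis by (intro exI[of _ 0]) simp
      next
        case P2 thus ?thesis by (intro exI[of _ 1]) simp
      next
        case P3 thus ?thesis by (intro exI[of _ 2]) simp
      qed
      then obtain k where k: "k < 3" "[P1,P2,P3] ! k = p" by blast
      define n where "n = 3*N + k"
      have rn: "rr n = p" using k by (simp add: rr_def n_def)
      define t where "t = length (W (Suc n)) - 1"
      have lt: "Suc n \<le> length (W (Suc n))" by (rule Wlen)
      have "W (Suc n) ! t = rr n" unfolding t_def WS by (simp add: nth_append)
      hence "\<sigma> t = p" using \<sigma>W[of t "Suc n"] lt rn unfolding t_def by simp
      moreover have "t \<ge> N" using lt unfolding t_def n_def by simp
      ultimately show ?thesis by blast
    qed
    thus ?thesis unfolding correct_def by (auto simp: unbounded_infinite)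
  qed
  obtain d where d: "d \<in> DP" using DPne by blast
  obtain v where "decides A I \<sigma> d v" using live[OF fairM[OF fair] d] fair by blast
  then obtain n where n: "decL A I DP (map \<sigma> [0..<n]) v" using decides_decL d by blast
  have u: "[0..<length (W n)] = [0..<n] @ [n..<length (W n)]"
    using upt_add_eq_append[of 0 n "length (W n) - n"] Wlen[of n] by simp
  have "decL A I DP (map \<sigma> [0..<n] @ map \<sigma> [n..<length (W n)]) v" by (rule decL_append[OF n])
  hence "decL A I DP (W n) v" using \<sigma>map[of n] u by simp
  thus False using dec_not_biv Wb by blast
qed

end


definition code :: "nat option \<Rightarrow> nat" where "code x = (case x of None \<Rightarrow> 0 | Some v \<Rightarrow> Suc v)"
definition dcode :: "nat \<Rightarrow> nat option" where "dcode s = (if s = 0 then None else Some (s - 1))"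

lemma dcode_code[simp]: "dcode (code x) = x"
  by (cases x) (simp_all add: code_def dcode_def)

lemma code_eq0[simp]: "code x = 0 \<longleftrightarrow> x = None"
  by (cases x) (simp_all add: code_def)

definition alg1 :: "bool \<Rightarrow> bool \<Rightarrow> alg" where
  "alg1 b1 b23 = \<lparr>a_init = (\<lambda>p x. if p = P3 then 0 else code x),
     a_op = (\<lambda>p s. if p = P3 then Snapshot else Update s),
     a_next_upd = (\<lambda>p s. s),
     a_next_snap = (\<lambda>p s m. if s \<noteq> 0 then s else (case m P2 of None \<Rightarrow> 0 | Some c \<Rightarrow> c)),
     a_dec = (\<lambda>p s. if (p = P1 \<and> b1) \<or> (p \<noteq> P1 \<and> b23) then dcode s else None)\<rparr>"

lemma alg1_simps[simp]:
  "a_init (alg1 b1 b23) p x = (if p = P3 then 0 else code x)"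
  "a_op (alg1 b1 b23) p s = (if p = P3 then Snapshot else Update s)"
  "a_next_upd (alg1 b1 b23) p s = s"
  "a_next_snap (alg1 b1 b23) p s m = (if s \<noteq> 0 then s else (case m P2 of None \<Rightarrow> 0 | Some c \<Rightarrow> c))"
  "a_dec (alg1 b1 b23) p s = (if (p = P1 \<and> b1) \<or> (p \<noteq> P1 \<and> b23) then dcode s else None)"
  by (simp_all add: alg1_def)

lemma alg1_inv:
  "fst (exec (alg1 b1 b23) I \<sigma> n) P1 = code (I P1) \<and> fst (exec (alg1 b1 b23) I \<sigma> n) P2 = code (I P2)
   \<and> (snd (exec (alg1 b1 b23) I \<sigma> n) P2 = None \<or> (snd (exec (alg1 b1 b23) I \<sigma> n) P2 = Some (code (I P2)) \<and> (\<exists>t<n. \<sigma> t = P2)))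
   \<and> (fst (exec (alg1 b1 b23) I \<sigma> n) P3 \<noteq> 0 \<longrightarrow> fst (exec (alg1 b1 b23) I \<sigma> n) P3 = code (I P2) \<and> (\<exists>t<n. \<sigma> t = P2))"
proof (induction n)
  case 0 thus ?case by simp
next
  case (Suc n)
  obtain st m where C: "exec (alg1 b1 b23) I \<sigma> n = (st, m)" by fastforce
  show ?case
  proof (cases "\<sigma> n")
    case P1 thus ?thesis using Suc C by (auto simp: step_def less_Suc_eq)
  next
    case P2 thus ?thesis using Suc C by (auto simp: step_def less_Suc_eq)
  next
    case P3 thus ?thesis using Suc C by (auto simp: step_def less_Suc_eq split: option.split)
  qed
qed

lemma alg1_reg: "\<exists>t<n. \<sigma> t = P2 \<Longrightarrow> snd (exec (alg1 b1 b23) I \<sigma> n) P2 = Some (code (I P2))"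
proof (induction n)
  case 0 thus ?case by simp
next
  case (Suc n)
  show ?case
  proof (cases "\<sigma> n = P2")
    case True
    have "fst (exec (alg1 b1 b23) I \<sigma> n) P2 = code (I P2)" using alg1_inv by blast
    thus ?thesis using True by (simp add: step_def Let_def)
  next
    case False
    hence "\<exists>t<n. \<sigma> t = P2" using Suc.prems less_Suc_eq by auto
    thus ?thesis using Suc.IH False by (simp add: step_snd_other)
  qed
qed

lemma alg1_decides:
  assumes "decides (alg1 b1 b23) I \<sigma> p v"
  shows "(p = P1 \<and> b1 \<and> I P1 = Some v \<and> P1 \<in> participating \<sigma>) \<or> (p \<noteq> P1 \<and> b23 \<and> I P2 = Some v \<and> P2 \<in> participating \<sigma>)"
proof -
  obtain t where t: "\<sigma> t = p" "a_dec (alg1 b1 b23) p (fst (exec (alg1 b1 b23) I \<sigma> (Suc t)) p) = Some v"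
    using assms unfolding decides_def by blast
  note inv = alg1_inv[of b1 b23 I \<sigma> "Suc t"]
  have rp: "p \<in> participating \<sigma>" using t(1) unfolding participating_def by (metis rangeI)
  have r2: "P2 \<in> participating \<sigma>" if "\<sigma> t' = P2" for t' using that unfolding participating_def by (metis rangeI)
  show ?thesis
  proof (cases p)
    case P1 thus ?thesis using t inv rp by (auto split: if_splits)
  next
    case P2 thus ?thesis using t inv rp by (auto split: if_splits)
  next
    case P3
    hence "fst (exec (alg1 b1 b23) I \<sigma> (Suc t)) P3 \<noteq> 0" using t by (auto simp: dcode_def split: if_splits)
    thus ?thesis using P3 t inv r2 by (auto split: if_splits)
  qed
qed

lemma correct_exists: "p \<in> correct \<sigma> \<Longrightarrow> \<exists>t\<ge>N. \<sigma> t = p"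
  unfolding correct_def by (simp add: unbounded_infinite)

lemma alg1_live1: assumes "b1" "I P1 = Some v" "P1 \<in> correct \<sigma>" shows "decides (alg1 b1 b23) I \<sigma> P1 v"
proof -
  obtain t where t: "\<sigma> t = P1" using correct_exists[OF assms(3), of 0] by blast
  have "fst (exec (alg1 b1 b23) I \<sigma> (Suc t)) P1 = code (I P1)" using alg1_inv by blast
  thus ?thesis unfolding decides_def using t assms by (intro exI[of _ t]) (simp del: exec.simps)
qed

lemma alg1_live2: assumes "b23" "I P2 = Some v" "P2 \<in> correct \<sigma>" shows "decides (alg1 b1 b23) I \<sigma> P2 v"
proof -
  obtain t where t: "\<sigma> t = P2" using correct_exists[OF assms(3), of 0] by blast
  have "fst (exec (alg1 b1 b23) I \<sigma> (Suc t)) P2 = code (I P2)" using alg1_inv by blast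
  thus ?thesis unfolding decides_def using t assms by (intro exI[of _ t]) (simp del: exec.simps)
qed

lemma alg1_live3:
  assumes "b23" "I P2 = Some v" "P2 \<in> correct \<sigma>" "P3 \<in> correct \<sigma>"
  shows "decides (alg1 b1 b23) I \<sigma> P3 v"
proof -
  obtain t0 where t0: "\<sigma> t0 = P2" using correct_exists[OF assms(3), of 0] by blast
  obtain t1 where t1: "t1 \<ge> Suc t0" "\<sigma> t1 = P3" using correct_exists[OF assms(4)] by blast
  have reg: "snd (exec (alg1 b1 b23) I \<sigma> t1) P2 = Some (code (I P2))"
    using alg1_reg t0 t1(1) by (metis Suc_le_lessD)
  note inv = alg1_inv[of b1 b23 I \<sigma> t1]
  have "fst (exec (alg1 b1 b23) I \<sigma> (Suc t1)) P3 = code (I P2)"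
    using t1(2) reg inv by (auto simp: step_def Let_def)
  thus ?thesis unfolding decides_def using t1(2) assms(1,2) by (intro exI[of _ t1]) (simp del: exec.simps)
qed


lemma card_set_option_le: "card (set_option x) \<le> 1"
  by (cases x) simp_all

lemma alg1_kset:
  assumes c23: "\<And>\<sigma>. \<sigma> \<in> M \<Longrightarrow> P3 \<in> correct \<sigma> \<Longrightarrow> P2 \<in> correct \<sigma>"
    and n1: "\<And>\<sigma>. \<sigma> \<in> M \<Longrightarrow> \<not> b1 \<Longrightarrow> P1 \<notin> correct \<sigma>"
    and n23: "\<And>\<sigma>. \<sigma> \<in> M \<Longrightarrow> \<not> b23 \<Longrightarrow> P2 \<notin> correct \<sigma> \<and> P3 \<notin> correct \<sigma>"
    and k: "(if b1 then 1 else 0) + (if b23 then 1 else 0) \<le> k"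
  shows "kset_solves k M (alg1 b1 b23)"
  unfolding kset_solves_def
proof (intro conjI allI impI)
  fix I :: "proc \<Rightarrow> nat option" and \<sigma> :: schedule assume I: "\<forall>p. I p \<noteq> None"
  let ?D = "{v. \<exists>p. decides (alg1 b1 b23) I \<sigma> p v}"
  let ?E = "(if b1 then set_option (I P1) else {}) \<union> (if b23 then set_option (I P2) else {})"
  have sub: "?D \<subseteq> ?E" using alg1_decides by fastforce
  have fE: "finite ?E" by simp
  have cE: "card ?E \<le> k"
  proof -
    have "card ?E \<le> card (if b1 then set_option (I P1) else {}) + card (if b23 then set_option (I P2) else {})"
      by (rule card_Un_le)
    also have "\<dots> \<le> (if b1 then 1 else 0) + (if b23 then 1 else 0)"
      using card_set_option_le[of "I P1"] card_set_option_le[of "I P2"] by (auto split: if_splits)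
    finally show ?thesis using k by simp
  qed
  have val: "\<forall>v\<in>?D. \<exists>q\<in>participating \<sigma>. I q = Some v"
    using alg1_decides by fastforce
  show "let D = ?D in finite D \<and> card D \<le> k \<and> (\<forall>v\<in>D. \<exists>q\<in>participating \<sigma>. I q = Some v)"
    unfolding Let_def using sub fE cE val by (meson card_mono le_trans finite_subset)
next
  fix I :: "proc \<Rightarrow> nat option" and \<sigma> :: schedule assume I: "\<forall>p. I p \<noteq> None" and sM: "\<sigma> \<in> M"
  show "\<forall>p\<in>correct \<sigma>. \<exists>v. decides (alg1 b1 b23) I \<sigma> p v"
  proof
    fix p assume pc: "p \<in> correct \<sigma>"
    obtain v1 where v1: "I P1 = Some v1" using I by blast
    obtain v2 where v2: "I P2 = Some v2" using I by blast
    show "\<exists>v. decides (alg1 b1 b23) I \<sigma> p v"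
    proof (cases p)
      case P1 thus ?thesis using alg1_live1[where I=I and v=v1, OF _ v1] n1[OF sM] pc by blast
    next
      case P2 thus ?thesis using alg1_live2[where I=I and v=v2, OF _ v2] n23[OF sM] pc by blast
    next
      case P3 thus ?thesis using alg1_live3[where I=I and v=v2, OF _ v2] n23[OF sM] pc c23[OF sM] by blast
    qed
  qed
qed

lemma Aadv_iff: "S \<in> Aadv \<longleftrightarrow> S = {P1} \<or> S = {P2, P3} \<or> S = UNIV"
  unfolding Aadv_def using UNIV_proc by auto

lemma adv_c23: "\<sigma> \<in> adv_model Aadv \<Longrightarrow> P3 \<in> correct \<sigma> \<Longrightarrow> P2 \<in> correct \<sigma>"
  unfolding adv_model_def Aadv_iff by auto

lemma cons23_adv: "cons23_solves (adv_model Aadv) (alg1 False True)"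
  unfolding cons23_solves_def
proof (rule conjI; intro allI impI)
  fix I :: "proc \<Rightarrow> nat option" and \<sigma> :: schedule assume I: "cons23_inputs I"
  have a: "\<forall>p v. p \<in> {P2, P3} \<and> decides (alg1 False True) I \<sigma> p v \<longrightarrow> (\<exists>q\<in>{P2, P3} \<inter> participating \<sigma>. I q = Some v)"
  proof (intro allI impI)
    fix p v assume "p \<in> {P2, P3} \<and> decides (alg1 False True) I \<sigma> p v"
    hence "I P2 = Some v" "P2 \<in> participating \<sigma>" using alg1_decides[of False True I \<sigma> p v] by auto
    thus "\<exists>q\<in>{P2, P3} \<inter> participating \<sigma>. I q = Some v" by blast
  qed
  have b: "\<forall>p q v w. p \<in> {P2, P3} \<and> q \<in> {P2, P3} \<and> decides (alg1 False True) I \<sigma> p v \<and> decides (alg1 False True) I \<sigma> q w \<longrightarrow> v = w"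
  proof (intro allI impI)
    fix p q v w assume "p \<in> {P2, P3} \<and> q \<in> {P2, P3} \<and> decides (alg1 False True) I \<sigma> p v \<and> decides (alg1 False True) I \<sigma> q w"
    hence "I P2 = Some v" "I P2 = Some w" using alg1_decides[of False True I \<sigma> p v] alg1_decides[of False True I \<sigma> q w] by auto
    thus "v = w" by simp
  qed
  show "(\<forall>p v. p \<in> {P2, P3} \<and> decides (alg1 False True) I \<sigma> p v \<longrightarrow> (\<exists>q\<in>{P2, P3} \<inter> participating \<sigma>. I q = Some v)) \<and>
    (\<forall>p q v w. p \<in> {P2, P3} \<and> q \<in> {P2, P3} \<and> decides (alg1 False True) I \<sigma> p v \<and> decides (alg1 False True) I \<sigma> q w \<longrightarrow> v = w)"
    using a b by blast
next
  fix I :: "proc \<Rightarrow> nat option" and \<sigma> :: schedule assume I: "cons23_inputs I" and sM: "\<sigma> \<in> adv_model Aadv"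
  obtain v2 where v2: "I P2 = Some v2" using I unfolding cons23_inputs_def by blast
  show "\<forall>p\<in>{P2, P3} \<inter> correct \<sigma>. \<exists>v. decides (alg1 False True) I \<sigma> p v"
  proof
    fix p assume "p \<in> {P2, P3} \<inter> correct \<sigma>"
    hence p: "p = P2 \<or> p = P3" and pc: "p \<in> correct \<sigma>" by auto
    show "\<exists>v. decides (alg1 False True) I \<sigma> p v"
    proof (cases "p = P2")
      case True thus ?thesis using alg1_live2[where I=I and v=v2, OF TrueI v2] pc by blast
    next
      case False
      hence "p = P3" using p by blast
      hence "P3 \<in> correct \<sigma>" "P2 \<in> correct \<sigma>" using pc adv_c23[OF sM] by auto
      thus ?thesis using alg1_live3[where I=I and v=v2, OF TrueI v2] \<open>p = P3\<close> by blast
    qed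
  qed
qed


lemma not0: assumes "\<sigma> \<in> M" shows "\<not> kset_solvable 0 M"
proof
  assume "kset_solvable 0 M"
  then obtain A where S: "kset_solves 0 M A" unfolding kset_solvable_def by blast
  define I :: "proc \<Rightarrow> nat option" where "I p = Some 0" for p
  have In: "\<forall>p. I p \<noteq> None" by (simp add: I_def)
  obtain p where p: "p \<in> correct \<sigma>" using correct_ne by blast
  obtain v where v: "decides A I \<sigma> p v" using S In assms p unfolding kset_solves_def by blast
  have "finite {v. \<exists>p. decides A I \<sigma> p v}" "card {v. \<exists>p. decides A I \<sigma> p v} \<le> 0"
    using S In unfolding kset_solves_def Let_def by blast+
  hence "{v. \<exists>p. decides A I \<sigma> p v} = {}" by simp
  thus False using v by blast
qed

lemma least_eq: "kset_solvable k M \<Longrightarrow> (\<And>j. j < k \<Longrightarrow> \<not> kset_solvable j M) \<Longrightarrow> (LEAST k. kset_solvable k M) = k"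
  by (rule Least_equality) (auto simp: not_less[symmetric])

lemma participating_const: "participating (\<lambda>_. p) = {p}"
  by (simp add: participating_def)

lemma participating_alt: "participating (alt p q) = {p, q}"
  by (simp add: participating_def range_alt)

lemma no_kset1: "\<not> kset_solvable 1 (adv_model Aadv)"
proof
  assume "kset_solvable 1 (adv_model Aadv)"
  then obtain A where S: "kset_solves 1 (adv_model Aadv) A" unfolding kset_solvable_def by blast
  define I :: "proc \<Rightarrow> nat option" where "I p = (if p = P1 then Some 0 else Some 1)" for p
  have In: "\<forall>p. I p \<noteq> None" by (simp add: I_def)
  have safe: "\<And>\<sigma>. let D = {v. \<exists>p. decides A I \<sigma> p v} in finite D \<and> card D \<le> 1 \<and> (\<forall>v\<in>D. \<exists>q\<in>participating \<sigma>. I q = Some v)"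
    using S In unfolding kset_solves_def by blast
  have liv: "\<And>\<sigma> p. \<sigma> \<in> adv_model Aadv \<Longrightarrow> p \<in> correct \<sigma> \<Longrightarrow> \<exists>v. decides A I \<sigma> p v"
    using S In unfolding kset_solves_def by blast
  have val: "\<And>\<sigma> p v. decides A I \<sigma> p v \<Longrightarrow> \<exists>q\<in>participating \<sigma>. I q = Some v"
  proof -
    fix \<sigma> p v assume "decides A I \<sigma> p v"
    moreover have "\<forall>v\<in>{v. \<exists>p. decides A I \<sigma> p v}. \<exists>q\<in>participating \<sigma>. I q = Some v"
      using safe[of \<sigma>] by (simp add: Let_def)
    ultimately show "\<exists>q\<in>participating \<sigma>. I q = Some v" by blast
  qed
  have agr: "\<And>\<sigma> p q v w. p \<in> UNIV \<Longrightarrow> q \<in> UNIV \<Longrightarrow> decides A I \<sigma> p v \<Longrightarrow> decides A I \<sigma> q w \<Longrightarrow> v = w"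
  proof -
    fix \<sigma> p q v w assume "decides A I \<sigma> p v" "decides A I \<sigma> q w"
    moreover have "finite {v. \<exists>p. decides A I \<sigma> p v}" "card {v. \<exists>p. decides A I \<sigma> p v} \<le> Suc 0"
      using safe[of \<sigma>] by (simp_all add: Let_def)
    ultimately show "v = w" using card_le_Suc0_iff_eq by blast
  qed
  have fairM: "\<And>\<sigma>. correct \<sigma> = UNIV \<Longrightarrow> \<sigma> \<in> adv_model Aadv" by (simp add: adv_model_def Aadv_iff)
  have cont: "\<And>r. \<exists>\<tau> d. d \<in> UNIV \<and> d \<noteq> r \<and> r \<notin> range \<tau> \<and> (\<forall>xs. app xs \<tau> \<in> adv_model Aadv \<and> d \<in> correct (app xs \<tau>))"
  proof -
    fix r show "\<exists>\<tau> d. d \<in> UNIV \<and> d \<noteq> r \<and> r \<notin> range \<tau> \<and> (\<forall>xs. app xs \<tau> \<in> adv_model Aadv \<and> d \<in> correct (app xs \<tau>))"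
    proof (cases "r = P1")
      case True
      show ?thesis using True
        by (intro exI[of _ "alt P2 P3"] exI[of _ P2]) (simp add: range_alt correct_app correct_alt adv_model_def Aadv_iff)
    next
      case False
      have "range (\<lambda>_::nat. P1) = {P1}" by simp
      thus ?thesis using False
        by (intro exI[of _ "\<lambda>_. P1"] exI[of _ P1]) (simp add: correct_app correct_const adv_model_def Aadv_iff)
    qed
  qed
  have init2: "\<exists>\<sigma>1 \<sigma>2 p1 p2 v1 v2. p1 \<in> UNIV \<and> p2 \<in> UNIV \<and> decides A I \<sigma>1 p1 v1 \<and> decides A I \<sigma>2 p2 v2 \<and> v1 \<noteq> v2"
  proof -
    have m1: "(\<lambda>_. P1) \<in> adv_model Aadv" by (simp add: adv_model_def Aadv_iff correct_const)
    have "P1 \<in> correct (\<lambda>_. P1)" by (simp add: correct_const)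
    then obtain v1 where v1: "decides A I (\<lambda>_. P1) P1 v1" using liv[OF m1] by blast
    have "v1 = 0" using val[OF v1] by (simp add: participating_const I_def)
    have m2: "alt P2 P3 \<in> adv_model Aadv" by (simp add: adv_model_def Aadv_iff correct_alt)
    have "P2 \<in> correct (alt P2 P3)" by (simp add: correct_alt)
    then obtain v2 where v2: "decides A I (alt P2 P3) P2 v2" using liv[OF m2] by blast
    have "v2 = 1" using val[OF v2] by (auto simp: participating_alt I_def)
    show ?thesis using v1 v2 \<open>v1 = 0\<close> \<open>v2 = 1\<close> by force
  qed
  interpret F: flp A I UNIV "adv_model Aadv"
    apply (rule flp.intro)
    using agr apply blast
    using liv apply blast
    using fairM apply blast
     apply simp
    using cont apply blast
    using init2 apply blast
    done
  show False by (rule F.contradiction)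
qed


lemma mem_adv: "\<sigma> \<in> adv_model Aadv \<longleftrightarrow> correct \<sigma> = {P1} \<or> correct \<sigma> = {P2, P3} \<or> correct \<sigma> = UNIV"
  by (simp add: adv_model_def Aadv_iff)

lemma alpha_UNIV: "agreement_fun (adv_model Aadv) UNIV = 2"
proof -
  have m1: "(\<lambda>_. P1) \<in> adv_model Aadv" by (simp add: mem_adv correct_const)
  have "kset_solvable 2 (adv_model Aadv)"
    unfolding kset_solvable_def using alg1_kset[of "adv_model Aadv" True True 2] adv_c23 by auto
  moreover have "\<And>j. j < 2 \<Longrightarrow> \<not> kset_solvable j (adv_model Aadv)"
    using not0[OF m1] no_kset1 by (auto simp: less_2_cases_iff)
  ultimately have "(LEAST k. kset_solvable k (adv_model Aadv)) = 2" by (rule least_eq)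
  thus ?thesis unfolding agreement_fun_def using m1 by auto
qed

lemma alpha_P1:
  assumes "P1 \<in> P" "\<not> (P2 \<in> P \<and> P3 \<in> P)"
  shows "agreement_fun (adv_model Aadv) P = 1"
proof -
  let ?M = "{\<sigma> \<in> adv_model Aadv. participating \<sigma> \<subseteq> P}"
  have m1: "(\<lambda>_. P1) \<in> ?M" using assms by (simp add: mem_adv correct_const participating_const)
  have c: "correct \<sigma> = {P1}" if "\<sigma> \<in> ?M" for \<sigma>
  proof -
    have "correct \<sigma> \<subseteq> P" using that correct_sub by blast
    thus ?thesis using that assms unfolding mem_adv by auto
  qed
  have "kset_solvable 1 ?M"
    unfolding kset_solvable_def using alg1_kset[of ?M True False 1] c by auto
  moreover have "\<And>j. j < 1 \<Longrightarrow> \<not> kset_solvable j ?M" using not0[OF m1] by auto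
  ultimately have "(LEAST k. kset_solvable k ?M) = 1" by (rule least_eq)
  thus ?thesis unfolding agreement_fun_def using m1 by auto
qed

lemma alpha_23: "agreement_fun (adv_model Aadv) {P2, P3} = 1"
proof -
  let ?M = "{\<sigma> \<in> adv_model Aadv. participating \<sigma> \<subseteq> {P2, P3}}"
  have m1: "alt P2 P3 \<in> ?M" by (simp add: mem_adv correct_alt participating_alt)
  have c: "correct \<sigma> = {P2, P3}" if "\<sigma> \<in> ?M" for \<sigma>
  proof -
    have "correct \<sigma> \<subseteq> {P2, P3}" using that correct_sub by blast
    thus ?thesis using that unfolding mem_adv by auto
  qed
  have "kset_solvable 1 ?M"
    unfolding kset_solvable_def using alg1_kset[of ?M False True 1] c by auto
  moreover have "\<And>j. j < 1 \<Longrightarrow> \<not> kset_solvable j ?M" using not0[OF m1] by auto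
  ultimately have "(LEAST k. kset_solvable k ?M) = 1" by (rule least_eq)
  thus ?thesis unfolding agreement_fun_def using m1 by auto
qed

lemma alpha_single: assumes "p \<noteq> P1" shows "agreement_fun (adv_model Aadv) {p} = 0"
proof -
  have "\<not> (\<exists>\<sigma>\<in>adv_model Aadv. participating \<sigma> \<subseteq> {p})"
  proof
    assume "\<exists>\<sigma>\<in>adv_model Aadv. participating \<sigma> \<subseteq> {p}"
    then obtain \<sigma> where s: "\<sigma> \<in> adv_model Aadv" "participating \<sigma> \<subseteq> {p}" by blast
    hence "correct \<sigma> \<subseteq> {p}" using correct_sub by blast
    thus False using s(1) correct_ne[of \<sigma>] assms unfolding mem_adv by auto
  qed
  thus ?thesis unfolding agreement_fun_def by simp
qed

lemma alpha_other:
  assumes "P \<noteq> {}" "P \<noteq> {P2}" "P \<noteq> {P3}" "P \<noteq> UNIV"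
  shows "agreement_fun (adv_model Aadv) P = 1"
proof (cases "P1 \<in> P")
  case True
  have "\<not> (P2 \<in> P \<and> P3 \<in> P)"
  proof
    assume "P2 \<in> P \<and> P3 \<in> P"
    hence "P = UNIV" using True by (metis UNIV_eq_I proc.exhaust)
    thus False using assms by blast
  qed
  thus ?thesis using alpha_P1 True by blast
next
  case False
  have "P = {P2, P3}"
  proof -
    have "P \<subseteq> {P2, P3}"
    proof
      fix x assume "x \<in> P" thus "x \<in> {P2, P3}" using False by (cases x) auto
    qed
    thus ?thesis using assms by blast
  qed
  thus ?thesis using alpha_23 by simp
qed


lemma app_Nil[simp]: "app [] \<tau> = \<tau>" by (rule ext) (simp add: app_def)

lemma compl_eqs: "-{P1} = {P2, P3}" "-{P2} = {P1, P3}" "-{P3} = {P1, P2}"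
  by (simp_all add: Compl_eq_Diff_UNIV UNIV_proc, auto)

lemma alpha_compl: "agreement_fun (adv_model Aadv) (-{r}) = 1"
  by (cases r) (simp_all add: compl_eqs alpha_23 alpha_P1)

lemma alpha_cont:
  assumes "range \<tau> = -{r}" "correct \<tau> = -{r}"
  shows "app xs \<tau> \<in> alpha_model (agreement_fun (adv_model Aadv))"
proof (cases "r \<in> set xs")
  case True
  have p: "participating (app xs \<tau>) = UNIV" using True assms by (auto simp: participating_app)
  have "participating (app xs \<tau>) - correct (app xs \<tau>) = {r}" using p assms by (auto simp: correct_app)
  thus ?thesis using p by (simp add: alpha_model_def alpha_UNIV)
next
  case False
  have p: "participating (app xs \<tau>) = -{r}" using False assms by (auto simp: participating_app)
  have "participating (app xs \<tau>) - correct (app xs \<tau>) = {}" using p assms by (auto simp: correct_app)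
  thus ?thesis using p by (simp add: alpha_model_def alpha_compl)
qed

lemma no_cons23: "\<not> cons23_solvable (alpha_model (agreement_fun (adv_model Aadv)))"
proof
  let ?M = "alpha_model (agreement_fun (adv_model Aadv))"
  assume "cons23_solvable ?M"
  then obtain A where S: "cons23_solves ?M A" unfolding cons23_solvable_def by blast
  define I :: "proc \<Rightarrow> nat option" where "I p = (if p = P1 then None else if p = P2 then Some 0 else Some 1)" for p
  have In: "cons23_inputs I" by (simp add: I_def cons23_inputs_def)
  note SS = S[unfolded cons23_solves_def]
  have X: "(\<forall>p v. p \<in> {P2, P3} \<and> decides A I \<sigma> p v \<longrightarrow> (\<exists>q\<in>{P2, P3} \<inter> participating \<sigma>. I q = Some v)) \<and>
        (\<forall>p q v w. p \<in> {P2, P3} \<and> q \<in> {P2, P3} \<and> decides A I \<sigma> p v \<and> decides A I \<sigma> q w \<longrightarrow> v = w)" for \<sigma>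
    by (rule mp[OF conjunct1[OF SS, THEN spec, THEN spec] In])
  have Y: "\<sigma> \<in> ?M \<longrightarrow> (\<forall>p\<in>{P2, P3} \<inter> correct \<sigma>. \<exists>v. decides A I \<sigma> p v)" for \<sigma>
    by (rule mp[OF conjunct2[OF SS, THEN spec, THEN spec] In])
  have val: "\<And>\<sigma> p v. p \<in> {P2, P3} \<Longrightarrow> decides A I \<sigma> p v \<Longrightarrow> \<exists>q\<in>{P2, P3} \<inter> participating \<sigma>. I q = Some v"
  proof -
    fix \<sigma> p v assume "p \<in> {P2, P3}" "decides A I \<sigma> p v"
    thus "\<exists>q\<in>{P2, P3} \<inter> participating \<sigma>. I q = Some v" using conjunct1[OF X[of \<sigma>]] by blast
  qed
  have agr: "\<And>\<sigma> p q v w. p \<in> {P2, P3} \<Longrightarrow> q \<in> {P2, P3} \<Longrightarrow> decides A I \<sigma> p v \<Longrightarrow> decides A I \<sigma> q w \<Longrightarrow> v = w"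
  proof -
    fix \<sigma> p q v w assume "p \<in> {P2, P3}" "q \<in> {P2, P3}" "decides A I \<sigma> p v" "decides A I \<sigma> q w"
    thus "v = w" using conjunct2[OF X[of \<sigma>]] by blast
  qed
  have liv: "\<And>\<sigma> p. \<sigma> \<in> ?M \<Longrightarrow> p \<in> {P2, P3} \<Longrightarrow> p \<in> correct \<sigma> \<Longrightarrow> \<exists>v. decides A I \<sigma> p v"
  proof -
    fix \<sigma> p assume "\<sigma> \<in> ?M" "p \<in> {P2, P3}" "p \<in> correct \<sigma>"
    thus "\<exists>v. decides A I \<sigma> p v" using Y[of \<sigma>] by blast
  qed
  have fairM: "\<And>\<sigma>. correct \<sigma> = UNIV \<Longrightarrow> \<sigma> \<in> ?M"
  proof -
    fix \<sigma> :: schedule assume c: "correct \<sigma> = UNIV"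
    hence "participating \<sigma> = UNIV" using correct_sub[of \<sigma>] by blast
    thus "\<sigma> \<in> ?M" using c by (simp add: alpha_model_def alpha_UNIV)
  qed
  have cont: "\<And>r. \<exists>\<tau> d. d \<in> {P2, P3} \<and> d \<noteq> r \<and> r \<notin> range \<tau> \<and> (\<forall>xs. app xs \<tau> \<in> ?M \<and> d \<in> correct (app xs \<tau>))"
  proof -
    fix r show "\<exists>\<tau> d. d \<in> {P2, P3} \<and> d \<noteq> r \<and> r \<notin> range \<tau> \<and> (\<forall>xs. app xs \<tau> \<in> ?M \<and> d \<in> correct (app xs \<tau>))"
    proof (cases r)
      case P1
      have "range (alt P2 P3) = -{r}" "correct (alt P2 P3) = -{r}" using P1 by (simp_all add: range_alt correct_alt compl_eqs)
      thus ?thesis using alpha_cont[of "alt P2 P3" r] P1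
        by (intro exI[of _ "alt P2 P3"] exI[of _ P2]) (simp add: correct_app)
    next
      case P2
      have "range (alt P1 P3) = -{r}" "correct (alt P1 P3) = -{r}" using P2 by (simp_all add: range_alt correct_alt compl_eqs)
      thus ?thesis using alpha_cont[of "alt P1 P3" r] P2
        by (intro exI[of _ "alt P1 P3"] exI[of _ P3]) (simp add: correct_app)
    next
      case P3
      have "range (alt P1 P2) = -{r}" "correct (alt P1 P2) = -{r}" using P3 by (simp_all add: range_alt correct_alt compl_eqs)
      thus ?thesis using alpha_cont[of "alt P1 P2" r] P3
        by (intro exI[of _ "alt P1 P2"] exI[of _ P2]) (simp add: correct_app)
    qed
  qed
  have init2: "\<exists>\<sigma>1 \<sigma>2 p1 p2 v1 v2. p1 \<in> {P2, P3} \<and> p2 \<in> {P2, P3} \<and> decides A I \<sigma>1 p1 v1 \<and> decides A I \<sigma>2 p2 v2 \<and> v1 \<noteq> v2"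
  proof -
    have m1: "alt P1 P2 \<in> ?M" using alpha_cont[of "alt P1 P2" P3 "[]"]
      by (simp add: range_alt correct_alt compl_eqs)
    have "P2 \<in> correct (alt P1 P2)" by (simp add: correct_alt)
    then obtain v1 where v1: "decides A I (alt P1 P2) P2 v1" using liv[OF m1] by blast
    have "v1 = 0" using val[OF _ v1] by (auto simp: participating_alt I_def)
    have m2: "alt P1 P3 \<in> ?M" using alpha_cont[of "alt P1 P3" P2 "[]"]
      by (simp add: range_alt correct_alt compl_eqs)
    have "P3 \<in> correct (alt P1 P3)" by (simp add: correct_alt)
    then obtain v2 where v2: "decides A I (alt P1 P3) P3 v2" using liv[OF m2] by blast
    have "v2 = 1" using val[OF _ v2] by (auto simp: participating_alt I_def)
    show ?thesis using v1 v2 \<open>v1 = 0\<close> \<open>v2 = 1\<close> by force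
  qed
  interpret F: flp A I "{P2, P3}" ?M
    apply (rule flp.intro)
    using agr apply blast
    using liv apply blast
    using fairM apply blast
     apply simp
    using cont apply blast
    using init2 apply blast
    done
  show False by (rule F.contradiction)
qed


lemma setcon_empty: "setcon {} = 0" by (simp add: setcon.simps)

lemma restr_Aadv:
  "restr Aadv {} = {}" "restr Aadv {P2} = {}" "restr Aadv {P3} = {}"
  "restr Aadv {P2, P3} = {{P2, P3}}" "restr Aadv {P1, P3} = {{P1}}" "restr Aadv {P1, P2} = {{P1}}"
  by (auto simp: restr_def Aadv_def)

lemma setcon_23: "setcon {{P2, P3}} = 1"
proof -
  have "restr {{P2, P3}} ({P2, P3} - {a}) = {}" if "a \<in> {P2, P3}" for a using that by (auto simp: restr_def)
  hence "(\<lambda>a. setcon (restr {{P2, P3}} ({P2, P3} - {a}))) ` {P2, P3} = {0}" by (auto simp: setcon_empty)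
  thus ?thesis by (subst setcon.simps) simp
qed

lemma setcon_1: "setcon {{P1}} = 1"
proof -
  have "restr {{P1}} ({P1} - {P1}) = {}" by (auto simp: restr_def)
  thus ?thesis by (subst setcon.simps) (simp add: setcon_empty)
qed

lemma UNIV_minus: "UNIV - {P1} = {P2, P3}" "UNIV - {P2} = {P1, P3}" "UNIV - {P3} = {P1, P2}"
  by (auto simp: UNIV_proc)

lemma setcon_Aadv: "setcon Aadv = 2"
proof -
  have a1: "(\<lambda>a. setcon (restr Aadv ({P1} - {a}))) ` {P1} = {0}" using restr_Aadv by (simp add: setcon_empty)
  have a2: "(\<lambda>a. setcon (restr Aadv ({P2, P3} - {a}))) ` {P2, P3} = {0}"
    using restr_Aadv by (simp add: setcon_empty insert_Diff_if)
  have a3: "(\<lambda>a. setcon (restr Aadv ({P1, P2, P3} - {a}))) ` {P1, P2, P3} = {1}"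
    using restr_Aadv by (simp add: insert_Diff_if setcon_23 setcon_1 insert_commute)
  have eqA: "Aadv = {{P1}, {P2, P3}, {P1, P2, P3}}" by (simp add: Aadv_def)
  have ne: "Aadv \<noteq> {}" by (simp add: Aadv_def)
  have "setcon Aadv = Max ((\<lambda>S. Min ((\<lambda>a. setcon (restr Aadv (S - {a}))) ` S) + 1) ` Aadv)"
    by (subst setcon.simps) (simp add: ne)
  also have "\<dots> = Max ((\<lambda>S. Min ((\<lambda>a. setcon (restr Aadv (S - {a}))) ` S) + 1) ` {{P1}, {P2, P3}, {P1, P2, P3}})"
    by (simp only: eqA)
  also have "\<dots> = 2" using a1 a2 a3 by simp
  finally show ?thesis .
qed

lemma restr2_eq: "restr2 Aadv UNIV {P2, P3} = {{P2, P3}, {P1, P2, P3}}"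
  by (auto simp: restr2_def restr_def Aadv_def UNIV_proc)

lemma setcon_restr2: "setcon (restr2 Aadv UNIV {P2, P3}) = 1"
proof -
  let ?B = "{{P2, P3}, {P1, P2, P3}} :: proc set set"
  have r1: "restr ?B {P3} = {}" "restr ?B {P2} = {}" "restr ?B {P1, P3} = {}" "restr ?B {P2, P3} = {{P2, P3}}" "restr ?B {P1, P2} = {}"
    by (auto simp: restr_def UNIV_proc)
  have a2: "(\<lambda>a. setcon (restr ?B ({P2, P3} - {a}))) ` {P2, P3} = {0}"
    using r1 by (simp add: setcon_empty insert_Diff_if)
  have a3: "Min ((\<lambda>a. setcon (restr ?B ({P1, P2, P3} - {a}))) ` {P1, P2, P3}) = 0"
    using r1 by (simp add: insert_Diff_if setcon_23 setcon_empty insert_commute)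
  have "setcon ?B = Max ((\<lambda>S. Min ((\<lambda>a. setcon (restr ?B (S - {a}))) ` S) + 1) ` ?B)"
    by (subst setcon.simps) simp
  also have "\<dots> = 1" using a2 a3 by simp
  finally show ?thesis by (simp add: restr2_eq)
qed

lemma not_fair: "\<not> fair Aadv"
proof
  assume "fair Aadv"
  hence "setcon (restr2 Aadv UNIV {P2, P3}) = min (card {P2, P3}) (setcon (restr Aadv UNIV))"
    unfolding fair_def by blast
  moreover have "restr Aadv UNIV = Aadv" by (auto simp: restr_def)
  ultimately show False using setcon_restr2 setcon_Aadv by simp
qed


theorem mainTheorem14:
  shows "setcon Aadv = 2 \<and> setcon (restr2 Aadv UNIV {P2, P3}) = 1 \<and> \<not> fair Aadv
    \<and> agreement_fun (adv_model Aadv) {P2} = 0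
    \<and> agreement_fun (adv_model Aadv) {P3} = 0
    \<and> agreement_fun (adv_model Aadv) UNIV = 2
    \<and> (\<forall>P. P \<noteq> {} \<and> P \<noteq> {P2} \<and> P \<noteq> {P3} \<and> P \<noteq> UNIV \<longrightarrow>
          agreement_fun (adv_model Aadv) P = 1)
    \<and> cons23_solvable (adv_model Aadv)
    \<and> \<not> cons23_solvable (alpha_model (agreement_fun (adv_model Aadv)))"
  using setcon_Aadv setcon_restr2 not_fair alpha_single[of P2] alpha_single[of P3] alpha_UNIV
    alpha_other cons23_adv no_cons23 unfolding cons23_solvable_def[of "adv_model Aadv"] by auto

end
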